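(* Let $\mathbf{G}=(\mathcal{V},\mathcal{E})$ be a directed graph on $\mathcal{V}=\{1,\dots,m\}$ and let $\tau\ge 0$ be an integer. If the weak vertex-connectivity of $\mathbf{G}$ satisfies $\kappa(\bar{\mathbf{G}})\geq \tau+1$, then the TITAN algorithm (described in the context) is $\mathcal{A}$-private for every set $\mathcal{A}\subseteq\mathcal{V}$ of corrupted nodes with $|\mathcal{A}|\le\tau$.
   Context: $\bar{\mathbf{G}}$ is the undirected graph on $\mathcal{V}$ whose edges are the edges of $\mathcal{E}$ with orientation ignored (i.e. $\mathcal{E}$ together with all reversed edges); the weak vertex-connectivity of $\mathbf{G}$ is the vertex-connectivity $\kappa(\bar{\mathbf{G}})$. For $a'>0$ and real $y$, $\mathrm{mod}(y,a')=y-pa'$ with $p$ the unique integer such that $y-pa'\in[0,a')$. Each node $i$ holds a private input $x_i\in[0,a)$ for a fixed $a>0$. TITAN: each node $i$ draws, for each out-neighbor $j$, an independent $r_{ij}$ uniform on $[0,ma)$ and sends it to $j$; it computes $t_i=\mathrm{mod}\big(\sum_{j\in\mathcal{N}_i^{in}} r_{ji}-\sum_{j\in\mathcal{N}_i^{out}} r_{ij}, ma\big)$ and $\tilde{x}_i=\mathrm{mod}(x_i+t_i,ma)$; then all nodes run a deterministic protocol (repeated Top-$k$ max-type consensus on the pairs $(\tilde x_i,i)$) by which every node learns all of $\tilde{x}_1,\dots,\tilde{x}_m$, and output $\frac1m\mathrm{mod}(\sum_i\tilde x_i,ma)$. Adversary: honest-but-curious, corrupting a set $\mathcal{A}$ of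 nodes; it follows the protocol but observes everything stored, sent and received by corrupted nodes. Its view $\mathrm{View}_{\mathcal{A}}(x)$ consists of the inputs $\{x_i: i\in\mathcal{A}\}$, the perturbed inputs $\{\tilde{x}_i: i\notin\mathcal{A}\}$, and the random numbers $\{r_{ij}: i\in\mathcal{A}\text{ or } j\in\mathcal{A}\}$. The algorithm is $\mathcal{A}$-private if for all input vectors $x,x'\in[0,a)^m$ with $x_i=x'_i$ for all $i\in\mathcal{A}$ and $\sum_{i=1}^m x_i=\sum_{i=1}^m x'_i$, the random variables $\mathrm{View}_{\mathcal{A}}(x)$ and $\mathrm{View}_{\mathcal{A}}(x')$ have identical distributions. *)

theory Defs
  imports "HOL-Probability.Probability"
begin

definition rmod :: "real \<Rightarrow> real \<Rightarrow> real" where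
  "rmod y a' = y - of_int \<lfloor>y / a'\<rfloor> * a'"

definition und_connected_on :: "nat set \<Rightarrow> (nat \<times> nat) set \<Rightarrow> bool" where
  "und_connected_on U E \<longleftrightarrow>
     (\<forall>u\<in>U. \<forall>v\<in>U. (u, v) \<in> ({(x, y). x \<in> U \<and> y \<in> U \<and> ((x, y) \<in> E \<or> (y, x) \<in> E)})\<^sup>*)"

text \<open>Vertex connectivity kappa of the underlying undirected graph (weak vertex-connectivity
  of G): the minimum number of vertices whose removal leaves a disconnected graph or a graph
  with at most one vertex (so that the complete graph on m vertices has kappa = m - 1).\<close>
definition weak_vertex_connectivity :: "nat set \<Rightarrow> (nat \<times> nat) set \<Rightarrow> nat" where
  "weak_vertex_connectivity V E =
     Min {card S | S. S \<subseteq> V \<and> (card (V - S) \<le> 1 \<or> \<not> und_connected_on (V - S) E)}"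

definition titan_rand_space :: "nat \<Rightarrow> real \<Rightarrow> (nat \<times> nat) set \<Rightarrow> ((nat \<times> nat) \<Rightarrow> real) measure" where
  "titan_rand_space m a E = PiM E (\<lambda>_. uniform_measure lborel {0..<real m * a})"

definition titan_t :: "nat \<Rightarrow> real \<Rightarrow> (nat \<times> nat) set \<Rightarrow> ((nat \<times> nat) \<Rightarrow> real) \<Rightarrow> nat \<Rightarrow> real" where
  "titan_t m a E r i =
     rmod ((\<Sum>j\<in>{j. (j, i) \<in> E}. r (j, i)) - (\<Sum>j\<in>{j. (i, j) \<in> E}. r (i, j))) (real m * a)"

definition titan_perturbed :: "nat \<Rightarrow> real \<Rightarrow> (nat \<times> nat) set \<Rightarrow> (nat \<Rightarrow> real) \<Rightarrow> ((nat \<times> nat) \<Rightarrow> real) \<Rightarrow> nat \<Rightarrow> real" where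
  "titan_perturbed m a E x r i = rmod (x i + titan_t m a E r i) (real m * a)"

text \<open>Edges whose random number is seen by the adversary.\<close>
definition adv_edges :: "(nat \<times> nat) set \<Rightarrow> nat set \<Rightarrow> (nat \<times> nat) set" where
  "adv_edges E A = {(i, j) \<in> E. i \<in> A \<or> j \<in> A}"

definition titan_view ::
  "nat \<Rightarrow> real \<Rightarrow> (nat \<times> nat) set \<Rightarrow> nat set \<Rightarrow> (nat \<Rightarrow> real) \<Rightarrow> ((nat \<times> nat) \<Rightarrow> real)
    \<Rightarrow> (nat \<Rightarrow> real) \<times> (nat \<Rightarrow> real) \<times> ((nat \<times> nat) \<Rightarrow> real)" where
  "titan_view m a E A x r =
     (restrict x A,
      restrict (titan_perturbed m a E x r) ({1..m} - A),
      restrict r (adv_edges E A))"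

definition view_space :: "nat \<Rightarrow> (nat \<times> nat) set \<Rightarrow> nat set
    \<Rightarrow> ((nat \<Rightarrow> real) \<times> (nat \<Rightarrow> real) \<times> ((nat \<times> nat) \<Rightarrow> real)) measure" where
  "view_space m E A =
     PiM A (\<lambda>_. borel) \<Otimes>\<^sub>M (PiM ({1..m} - A) (\<lambda>_. borel) \<Otimes>\<^sub>M PiM (adv_edges E A) (\<lambda>_. borel))"

definition titan_private :: "nat \<Rightarrow> real \<Rightarrow> (nat \<times> nat) set \<Rightarrow> nat set \<Rightarrow> bool" where
  "titan_private m a E A \<longleftrightarrow>
     (\<forall>x x'. (\<forall>i\<in>{1..m}. x i \<in> {0..<a}) \<and> (\<forall>i\<in>{1..m}. x' i \<in> {0..<a})
        \<and> (\<forall>i\<in>A. x i = x' i) \<and> (\<Sum>i=1..m. x i) = (\<Sum>i=1..m. x' i)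
        \<longrightarrow> distr (titan_rand_space m a E) (view_space m E A) (titan_view m a E A x)
          = distr (titan_rand_space m a E) (view_space m E A) (titan_view m a E A x'))"

end

theory Submission
  imports Defs
begin


lemma rmod_add_int: "L \<noteq> 0 \<Longrightarrow> rmod (y + of_int k * L) L = rmod y L"
  unfolding rmod_def by (simp add: add_divide_distrib algebra_simps)

lemma rmod_repr: "\<exists>k::int. rmod y L = y + of_int k * L"
  unfolding rmod_def by (rule exI[of _ "- \<lfloor>y / L\<rfloor>"]) simp

lemma rmod_add_rmod: "L \<noteq> 0 \<Longrightarrow> rmod (z + rmod y L) L = rmod (z + y) L"
proof -
  assume L: "L \<noteq> 0"
  obtain k where "rmod y L = y + of_int k * L" using rmod_repr by blast
  then show ?thesis using rmod_add_int[OF L, of "z + y" k] by (simp add: add.assoc)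
qed

lemma rmod_id: "0 \<le> y \<Longrightarrow> y < L \<Longrightarrow> rmod y L = y"
  unfolding rmod_def by (simp add: floor_eq_iff)

lemma rmod_sub: "L \<le> y \<Longrightarrow> y < 2*L \<Longrightarrow> rmod y L = y - L"
proof -
  assume a: "L \<le> y" "y < 2*L"
  then have "L > 0" by linarith
  then have "\<lfloor>y / L\<rfloor> = 1" using a by (simp add: floor_eq_iff field_simps)
  then show ?thesis unfolding rmod_def by simp
qed

lemma rmod_range: "L > 0 \<Longrightarrow> 0 \<le> rmod y L \<and> rmod y L < L"
proof -
  assume L: "L > 0"
  have "of_int \<lfloor>y / L\<rfloor> * L \<le> y" "y < (of_int \<lfloor>y / L\<rfloor> + 1) * L"
    using floor_divide_lower[OF L] floor_divide_upper[OF L] by auto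
  then show ?thesis unfolding rmod_def by (simp add: algebra_simps)
qed

lemma rmod_measurable[measurable]:
  "f \<in> borel_measurable M \<Longrightarrow> (\<lambda>x. rmod (f x) L) \<in> borel_measurable M"
proof -
  assume f: "f \<in> borel_measurable M"
  have "(\<lambda>x. f x / L) \<in> borel_measurable M" using f by measurable
  then have "(\<lambda>x. real_of_int \<lfloor>f x / L\<rfloor>) \<in> borel_measurable M"
    using measurable_compose[OF _ borel_measurable_real_floor] by blast
  then show ?thesis unfolding rmod_def using f by measurable
qed

lemma lborel_transl: "S \<in> sets borel \<Longrightarrow> emeasure lborel ((+) (c::real) -` S) = emeasure lborel S"
proof -
  assume S: "S \<in> sets borel"
  have "emeasure lborel S = emeasure (distr lborel borel ((+) c)) S" by (simp add: lborel_distr_plus)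
  also have "\<dots> = emeasure lborel ((+) c -` S)" using S by (subst emeasure_distr) auto
  finally show ?thesis by simp
qed

lemma uniform_shift:
  assumes L: "L > 0"
  shows "distr (uniform_measure lborel {0..<L}) (uniform_measure lborel {0..<L}) (\<lambda>y. rmod (y + c) L)
     = uniform_measure lborel {0..<L}" (is "distr ?U ?U ?g = ?U")
proof -
  define c' where "c' = rmod c L"
  have c': "0 \<le> c'" "c' < L" using rmod_range[OF L] c'_def by auto
  have g: "?g y = rmod (y + c') L" for y
    using rmod_add_rmod[of L y c] L c'_def by simp
  have gm: "?g \<in> measurable ?U ?U"
  proof -
    have "?g \<in> borel_measurable borel" by measurable
    then show ?thesis using measurable_cong_sets[of ?U borel ?U borel] by simp
  qed
  show ?thesis
  proof (rule measure_eqI)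
    show "sets (distr ?U ?U ?g) = sets ?U" by simp
  next
    fix B assume "B \<in> sets (distr ?U ?U ?g)"
    then have B: "B \<in> sets borel" by simp
    have gB: "?g -` B \<in> sets borel" using measurable_sets_borel[OF _ B] gm
      by (metis measurable_cong_sets sets_lborel sets_uniform_measure)
    define P1 where "P1 = (+) c' -` (B \<inter> {c'..<L})"
    define P2 where "P2 = (+) (c' - L) -` (B \<inter> {0..<c'})"
    have eq: "{0..<L} \<inter> ?g -` B = P1 \<union> P2"
    proof (intro equalityI subsetI)
      fix y assume "y \<in> {0..<L} \<inter> ?g -` B"
      then have y: "y \<in> {0..<L}" "?g y \<in> B" by auto
      show "y \<in> P1 \<union> P2"
      proof (cases "y + c' < L")
        case True
        then have "?g y = y + c'" using g rmod_id y c' by simp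
        then show ?thesis using y True c' by (auto simp: P1_def add.commute)
      next
        case False
        then have "?g y = y + c' - L" using g rmod_sub y c' by simp
        then have "y + c' - L \<in> B" using y(2) by metis
        then have "c' - L + y \<in> B" by (simp add: algebra_simps)
        then show ?thesis using y False c' by (auto simp: P2_def)
      qed
    next
      fix y assume "y \<in> P1 \<union> P2"
      then show "y \<in> {0..<L} \<inter> ?g -` B"
      proof (elim UnE)
        assume "y \<in> P1"
        then show ?thesis using c' g rmod_id[of "y + c'" L]
          by (auto simp: P1_def add.commute)
      next
        assume "y \<in> P2"
        then have y2: "c' - L + y \<in> B" "L - c' \<le> y" "y < L" by (auto simp: P2_def)
        then have "rmod (y + c') L = c' - L + y" using c' rmod_sub[of L "y + c'"] by simp
        then show ?thesis using y2 c' g by auto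
      qed
    qed
    have P1m: "emeasure lborel P1 = emeasure lborel (B \<inter> {c'..<L})"
      unfolding P1_def using B by (intro lborel_transl) auto
    have P2m: "emeasure lborel P2 = emeasure lborel (B \<inter> {0..<c'})"
      unfolding P2_def using B by (intro lborel_transl) auto
    have s1: "P1 \<in> sets borel" "P2 \<in> sets borel" unfolding P1_def P2_def using B by auto
    have "emeasure lborel ({0..<L} \<inter> ?g -` B) = emeasure lborel P1 + emeasure lborel P2"
      unfolding eq using s1 by (intro plus_emeasure[symmetric]) (auto simp: P1_def P2_def)
    also have "\<dots> = emeasure lborel (B \<inter> {c'..<L}) + emeasure lborel (B \<inter> {0..<c'})"
      using P1m P2m by simp
    also have "\<dots> = emeasure lborel ((B \<inter> {c'..<L}) \<union> (B \<inter> {0..<c'}))"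
      using B by (intro plus_emeasure) auto
    also have "(B \<inter> {c'..<L}) \<union> (B \<inter> {0..<c'}) = {0..<L} \<inter> B" using c' by auto
    finally have key: "emeasure lborel ({0..<L} \<inter> ?g -` B) = emeasure lborel ({0..<L} \<inter> B)" .
    have "emeasure (distr ?U ?U ?g) B = emeasure ?U (?g -` B \<inter> space ?U)"
      using gm B by (intro emeasure_distr) auto
    also have "\<dots> = emeasure ?U (?g -` B)" by simp
    also have "\<dots> = emeasure lborel ({0..<L} \<inter> ?g -` B) / emeasure lborel {0..<L}"
      using gB by (subst emeasure_uniform_measure) auto
    also have "\<dots> = emeasure ?U B" using B key by (subst emeasure_uniform_measure) auto
    finally show "emeasure (distr ?U ?U ?g) B = emeasure ?U B" .
  qed
qed


lemma PiM_shift_one: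
  assumes I: "finite I" and N: "prob_space N" and gm: "g \<in> measurable N N" and gd: "distr N N g = N"
  shows "distr (PiM I (\<lambda>_. N)) (PiM I (\<lambda>_. N)) (\<lambda>r. \<lambda>i\<in>I. if i = e then g (r i) else r i)
     = PiM I (\<lambda>_. N)" (is "distr ?P ?P ?\<phi> = ?P")
proof -
  interpret product_prob_space "\<lambda>_. N" by (rule product_prob_spaceI) (rule N)
  have \<phi>m: "?\<phi> \<in> measurable ?P ?P"
  proof (rule measurable_restrict)
    fix i assume i: "i \<in> I"
    show "(\<lambda>r. if i = e then g (r i) else r i) \<in> measurable ?P N"
    proof (cases "i = e")
      case True
      then show ?thesis using measurable_compose[OF measurable_component_singleton[OF i] gm] by simp
    next
      case False
      then show ?thesis using measurable_component_singleton[OF i] by simp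
    qed
  qed
  show ?thesis
  proof (rule PiM_eqI[OF I])
    show "sets (distr ?P ?P ?\<phi>) = sets ?P" by simp
  next
    fix A assume A: "\<And>i. i \<in> I \<Longrightarrow> A i \<in> sets N"
    define A' where "A' i = (if i = e then g -` A i \<inter> space N else A i)" for i
    have A'm: "A' i \<in> sets N" if "i \<in> I" for i
    proof (cases "i = e")
      case True
      then show ?thesis unfolding A'_def using measurable_sets[OF gm A[OF that]] by simp
    next
      case False
      then show ?thesis unfolding A'_def using A[OF that] by simp
    qed
    have sub: "A i \<subseteq> space N" if "i \<in> I" for i using A[OF that] by (rule sets.sets_into_space)
    have pre: "?\<phi> -` PiE I A \<inter> space ?P = PiE I A'"
    proof (intro equalityI subsetI)
      fix r assume "r \<in> ?\<phi> -` PiE I A \<inter> space ?P"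
      then have r: "?\<phi> r \<in> PiE I A" "r \<in> space ?P" by auto
      show "r \<in> PiE I A'"
      proof (rule PiE_I)
        fix i assume i: "i \<in> I"
        have m1: "?\<phi> r i \<in> A i" using r(1) i by (rule PiE_mem)
        have "r \<in> PiE I (\<lambda>_. space N)" using r(2) by (simp add: space_PiM)
        then have m2: "r i \<in> space N" using i by (rule PiE_mem)
        have ph: "?\<phi> r i = (if i = e then g (r i) else r i)" using i by simp
        show "r i \<in> A' i"
        proof (cases "i = e")
          case True
          then show ?thesis using m1 m2 ph unfolding A'_def by simp
        next
          case False
          then show ?thesis using m1 ph unfolding A'_def by simp
        qed
      next
        fix i assume i: "i \<notin> I"
        have "r \<in> extensional I" using r(2) by (simp add: space_PiM PiE_def)
        then show "r i = undefined" using i by (rule extensional_arb)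
      qed
    next
      fix r assume r: "r \<in> PiE I A'"
      have A'sub: "A' i \<subseteq> space N" if "i \<in> I" for i using sub[OF that] by (auto simp: A'_def)
      have "?\<phi> r \<in> PiE I A"
      proof (rule PiE_I)
        fix i assume i: "i \<in> I"
        have "r i \<in> A' i" using r i by (rule PiE_mem)
        then have ri: "r i \<in> (if i = e then g -` A i \<inter> space N else A i)" unfolding A'_def .
        have ph: "?\<phi> r i = (if i = e then g (r i) else r i)" using i by simp
        show "?\<phi> r i \<in> A i"
        proof (cases "i = e")
          case True
          then show ?thesis using ri ph by auto
        next
          case False
          then show ?thesis using ri ph by auto
        qed
      qed simp
      moreover have "r \<in> space ?P" unfolding space_PiM
      proof (rule PiE_I)
        fix i assume i: "i \<in> I"
        have "r i \<in> A' i" using r i by (rule PiE_mem)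
        then show "r i \<in> space N" using A'sub[OF i] by blast
      next
        fix i assume "i \<notin> I" then show "r i = undefined" by (rule PiE_arb[OF r])
      qed
      ultimately show "r \<in> ?\<phi> -` PiE I A \<inter> space ?P" by blast
    qed
    have "emeasure (distr ?P ?P ?\<phi>) (PiE I A) = emeasure ?P (?\<phi> -` PiE I A \<inter> space ?P)"
      by (rule emeasure_distr[OF \<phi>m sets_PiM_I_finite[OF I A]])
    also have "\<dots> = (\<Prod>i\<in>I. emeasure N (A' i))" unfolding pre
      by (rule emeasure_PiM[OF I A'm])
    also have "\<dots> = (\<Prod>i\<in>I. emeasure N (A i))"
    proof (rule prod.cong)
      fix i assume i: "i \<in> I"
      show "emeasure N (A' i) = emeasure N (A i)"
      proof (cases "i = e")
        case True
        have "emeasure N (A i) = emeasure (distr N N g) (A i)" using gd by simp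
        also have "\<dots> = emeasure N (g -` A i \<inter> space N)"
          by (rule emeasure_distr[OF gm A[OF i]])
        also have "g -` A i \<inter> space N = A' i" using True by (simp add: A'_def)
        finally show ?thesis by simp
      qed (simp add: A'_def)
    qed simp
    finally show "emeasure (distr ?P ?P ?\<phi>) (PiE I A) = (\<Prod>i\<in>I. emeasure N (A i))" .
  qed
qed



definition mv :: "(nat \<Rightarrow> real) \<Rightarrow> nat \<Rightarrow> nat \<Rightarrow> real \<Rightarrow> nat \<Rightarrow> real" where
  "mv x u w d = (\<lambda>i. x i + (if i = u then d else 0) - (if i = w then d else 0))"

lemma comp_meas:
  "e \<in> E \<Longrightarrow> (\<lambda>r. r e) \<in> borel_measurable (titan_rand_space m a E)"
proof -
  assume e: "e \<in> E"
  have "(\<lambda>r. r e) \<in> measurable (titan_rand_space m a E) (uniform_measure lborel {0..<real m * a})"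
    unfolding titan_rand_space_def by (rule measurable_component_singleton[OF e])
  then show ?thesis
    using measurable_cong_sets[of "titan_rand_space m a E" "titan_rand_space m a E"
        "uniform_measure lborel {0..<real m * a}" borel] by simp
qed

lemma t_meas: "(\<lambda>r. titan_t m a E r i) \<in> borel_measurable (titan_rand_space m a E)"
  unfolding titan_t_def
  by (intro rmod_measurable borel_measurable_diff borel_measurable_sum comp_meas) auto

lemma view_meas:
  "titan_view m a E A x \<in> measurable (titan_rand_space m a E) (view_space m E A)"
  unfolding titan_view_def view_space_def
proof (intro measurable_Pair measurable_const measurable_restrict)
  show "restrict x A \<in> space (Pi\<^sub>M A (\<lambda>_. borel))" by (simp add: space_PiM)
next
  fix i
  show "(\<lambda>r. titan_perturbed m a E x r i) \<in> borel_measurable (titan_rand_space m a E)"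
    unfolding titan_perturbed_def using t_meas[of m a E i] by measurable
next
  fix e assume "e \<in> adv_edges E A"
  then have "e \<in> E" by (auto simp: adv_edges_def)
  then show "(\<lambda>r. r e) \<in> borel_measurable (titan_rand_space m a E)" by (rule comp_meas)
qed

lemma view_local:
  assumes "A \<subseteq> {1..m}" "\<forall>i\<in>{1..m}. x i = x' i"
  shows "titan_view m a E A x r = titan_view m a E A x' r"
  using assms unfolding titan_view_def titan_perturbed_def
  by (auto intro!: restrict_ext)

lemma sum_if_eq: "finite S \<Longrightarrow> (\<Sum>j\<in>S. f j + (if j = u \<and> P then w else 0)) = (\<Sum>j\<in>S. f j) + (if u \<in> S \<and> P then w else 0)"
  by (cases P) (simp_all add: sum.distrib sum.delta)

lemma edge_move:
  assumes L: "real m * a > 0" and fin: "finite E" and e: "(u, v) \<in> E" and uA: "u \<notin> A" and vA: "v \<notin> A"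
  shows "distr (titan_rand_space m a E) (view_space m E A) (titan_view m a E A x)
       = distr (titan_rand_space m a E) (view_space m E A) (titan_view m a E A (mv x u v d))"
proof -
  define L' where "L' = real m * a"
  define U where "U = uniform_measure lborel {0..<L'}"
  define P where "P = titan_rand_space m a E"
  define V where "V = view_space m E A"
  define g where "g = (\<lambda>y. rmod (y + d) L')"
  define \<phi> where "\<phi> = (\<lambda>r. \<lambda>i\<in>E. if i = (u, v) then g (r i) else r i)"
  have L'0a: "L' > 0" using L unfolding L'_def .
  have L'0: "L' > 0" "L' \<noteq> 0" using L'0a by simp_all
  have PU: "P = PiM E (\<lambda>_. U)" unfolding P_def titan_rand_space_def U_def L'_def ..
  have Uprob: "prob_space U" unfolding U_def
    by (rule prob_space_uniform_measure) (use L'0 in auto)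
  have gm: "g \<in> measurable U U"
  proof -
    have "g \<in> borel_measurable borel" unfolding g_def by measurable
    then show ?thesis using measurable_cong_sets[of U borel U borel] by (simp add: U_def)
  qed
  have gd: "distr U U g = U" unfolding U_def g_def by (rule uniform_shift[OF L'0(1)])
  have \<phi>m: "\<phi> \<in> measurable P P" unfolding PU \<phi>_def
  proof (rule measurable_restrict)
    fix i assume i: "i \<in> E"
    show "(\<lambda>r. if i = (u, v) then g (r i) else r i) \<in> measurable (PiM E (\<lambda>_. U)) U"
    proof (cases "i = (u, v)")
      case True
      then show ?thesis using measurable_compose[OF measurable_component_singleton[OF i] gm] by simp
    next
      case False
      then show ?thesis using measurable_component_singleton[OF i] by simp
    qed
  qed
  have \<phi>d: "distr P P \<phi> = P" unfolding PU \<phi>_def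
    by (rule PiM_shift_one[OF fin Uprob gm gd])
  have key: "titan_view m a E A (mv x u v d) (\<phi> r) = titan_view m a E A x r" for r
  proof -
    define w where "w = g (r (u, v)) - r (u, v)"
    obtain k :: int where k: "g (r (u, v)) = r (u, v) + d + of_int k * L'"
      using rmod_repr[of "r (u, v) + d" L'] unfolding g_def by blast
    have w: "w = d + of_int k * L'" using k w_def by simp
    have \<phi>e: "\<phi> r (j, i) = r (j, i) + (if j = u \<and> i = v then w else 0)" if "(j, i) \<in> E" for j i
      using that by (auto simp: \<phi>_def w_def)
    have finin: "finite {j. (j, i) \<in> E}" for i
      using finite_imageI[OF fin, of fst] by (rule finite_subset[rotated]) force
    have finout: "finite {j. (i, j) \<in> E}" for i
      using finite_imageI[OF fin, of snd] by (rule finite_subset[rotated]) force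
    have sin: "(\<Sum>j\<in>{j. (j, i) \<in> E}. \<phi> r (j, i)) = (\<Sum>j\<in>{j. (j, i) \<in> E}. r (j, i)) + (if i = v then w else 0)" for i
    proof -
      have "(\<Sum>j\<in>{j. (j, i) \<in> E}. \<phi> r (j, i)) = (\<Sum>j\<in>{j. (j, i) \<in> E}. r (j, i) + (if j = u \<and> i = v then w else 0))"
        by (rule sum.cong) (auto simp: \<phi>e)
      also have "\<dots> = (\<Sum>j\<in>{j. (j, i) \<in> E}. r (j, i)) + (if u \<in> {j. (j, i) \<in> E} \<and> i = v then w else 0)"
        by (rule sum_if_eq[OF finin])
      finally show ?thesis using e by auto
    qed
    have sout: "(\<Sum>j\<in>{j. (i, j) \<in> E}. \<phi> r (i, j)) = (\<Sum>j\<in>{j. (i, j) \<in> E}. r (i, j)) + (if i = u then w else 0)" for i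
    proof -
      have "(\<Sum>j\<in>{j. (i, j) \<in> E}. \<phi> r (i, j)) = (\<Sum>j\<in>{j. (i, j) \<in> E}. r (i, j) + (if j = v \<and> i = u then w else 0))"
        by (rule sum.cong) (auto simp: \<phi>e)
      also have "\<dots> = (\<Sum>j\<in>{j. (i, j) \<in> E}. r (i, j)) + (if v \<in> {j. (i, j) \<in> E} \<and> i = u then w else 0)"
        by (rule sum_if_eq[OF finout])
      finally show ?thesis using e by auto
    qed
    have pert: "titan_perturbed m a E (mv x u v d) (\<phi> r) i = titan_perturbed m a E x r i" for i
    proof -
      define S where "S = (\<Sum>j\<in>{j. (j, i) \<in> E}. r (j, i)) - (\<Sum>j\<in>{j. (i, j) \<in> E}. r (i, j))"
      define c :: int where "c = (if i = v then k else 0) - (if i = u then k else 0)"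
      have "titan_perturbed m a E (mv x u v d) (\<phi> r) i
          = rmod (mv x u v d i + rmod (S + (if i = v then w else 0) - (if i = u then w else 0)) L') L'"
        unfolding titan_perturbed_def titan_t_def sin sout S_def L'_def by (simp add: algebra_simps)
      also have "\<dots> = rmod (mv x u v d i + (S + (if i = v then w else 0) - (if i = u then w else 0))) L'"
        by (rule rmod_add_rmod[OF L'0(2)])
      also have "mv x u v d i + (S + (if i = v then w else 0) - (if i = u then w else 0))
          = (x i + S) + of_int c * L'"
        unfolding mv_def c_def w by (simp add: algebra_simps)
      also have "rmod \<dots> L' = rmod (x i + S) L'" by (rule rmod_add_int[OF L'0(2)])
      also have "\<dots> = rmod (x i + rmod S L') L'" by (rule rmod_add_rmod[OF L'0(2), symmetric])
      also have "\<dots> = titan_perturbed m a E x r i"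
        unfolding titan_perturbed_def titan_t_def S_def L'_def ..
      finally show ?thesis .
    qed
    have xA: "restrict (mv x u v d) A = restrict x A"
      using uA vA by (auto simp: mv_def intro!: restrict_ext)
    have rA: "restrict (\<phi> r) (adv_edges E A) = restrict r (adv_edges E A)"
      using uA vA by (auto simp: \<phi>_def adv_edges_def intro!: restrict_ext)
    show ?thesis unfolding titan_view_def xA rA using pert by (auto intro!: restrict_ext)
  qed
  have vm: "titan_view m a E A (mv x u v d) \<in> measurable P V"
    unfolding P_def V_def by (rule view_meas)
  have "distr P V (titan_view m a E A x) = distr P V (titan_view m a E A (mv x u v d) \<circ> \<phi>)"
    by (rule distr_cong) (auto simp: key)
  also have "\<dots> = distr (distr P P \<phi>) V (titan_view m a E A (mv x u v d))"
    by (rule distr_distr[OF vm \<phi>m, symmetric])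
  also have "\<dots> = distr P V (titan_view m a E A (mv x u v d))" using \<phi>d by simp
  finally show ?thesis unfolding P_def V_def .
qed



lemma mv_mv: "mv (mv x u v d) v w d = mv x u w d"
  by (auto simp: mv_def)

lemma mv_neg: "mv y w v (- d) = mv y v w d"
  by (auto simp: mv_def)

lemma mv_same: "mv x u u d = x"
  by (auto simp: mv_def)

lemma sum_mv: "finite S \<Longrightarrow> u \<in> S \<Longrightarrow> w \<in> S \<Longrightarrow> sum (mv x u w d) S = sum x S"
  unfolding mv_def by (simp add: sum.distrib sum_subtractf sum.delta)

lemma path_move:
  assumes L: "real m * a > 0" and fin: "finite E" and conn: "und_connected_on H E"
    and u: "u \<in> H" and w: "w \<in> H" and HA: "H \<inter> A = {}"
  shows "\<forall>x d. distr (titan_rand_space m a E) (view_space m E A) (titan_view m a E A x)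
       = distr (titan_rand_space m a E) (view_space m E A) (titan_view m a E A (mv x u w d))"
proof -
  define R where "R = {(x, y). x \<in> H \<and> y \<in> H \<and> ((x, y) \<in> E \<or> (y, x) \<in> E)}"
  have "(u, w) \<in> R\<^sup>*" using conn u w unfolding und_connected_on_def R_def by blast
  then show ?thesis
  proof (induction rule: rtrancl_induct)
    case base
    then show ?case by (simp add: mv_same)
  next
    case (step v w)
    show ?case
    proof (intro allI)
      fix x d
      define y where "y = mv x u v d"
      have vw: "v \<in> H" "w \<in> H" "(v, w) \<in> E \<or> (w, v) \<in> E" using step(2) by (auto simp: R_def)
      have vA: "v \<notin> A" "w \<notin> A" using vw HA by auto
      have "distr (titan_rand_space m a E) (view_space m E A) (titan_view m a E A y)
          = distr (titan_rand_space m a E) (view_space m E A) (titan_view m a E A (mv y v w d))"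
      proof (cases "(v, w) \<in> E")
        case True
        then show ?thesis using edge_move[OF L fin True vA] by blast
      next
        case False
        then have "(w, v) \<in> E" using vw by blast
        from edge_move[OF L fin this vA(2) vA(1), of y "- d"] show ?thesis by (simp add: mv_neg)
      qed
      then show "distr (titan_rand_space m a E) (view_space m E A) (titan_view m a E A x)
          = distr (titan_rand_space m a E) (view_space m E A) (titan_view m a E A (mv x u w d))"
        using step(3) unfolding y_def mv_mv by metis
    qed
  qed
qed

theorem theorem3:
  fixes m \<tau> :: nat and a :: real and E :: "(nat \<times> nat) set"
  assumes "a > 0"
    and "E \<subseteq> {1..m} \<times> {1..m}"
    and "weak_vertex_connectivity {1..m} E \<ge> \<tau> + 1"
  shows "\<forall>A. A \<subseteq> {1..m} \<and> card A \<le> \<tau> \<longrightarrow> titan_private m a E A"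
proof (intro allI impI)
  fix A assume A: "A \<subseteq> {1..m} \<and> card A \<le> \<tau>"
  define V0 where "V0 = {1..m}"
  define H where "H = V0 - A"
  define K where "K = {card S | S. S \<subseteq> V0 \<and> (card (V0 - S) \<le> 1 \<or> \<not> und_connected_on (V0 - S) E)}"
  have finK: "finite K"
    by (rule finite_subset[of K "card ` Pow V0"]) (auto simp: K_def V0_def)
  have good: "\<not> (card H \<le> 1 \<or> \<not> und_connected_on H E)"
  proof
    assume "card H \<le> 1 \<or> \<not> und_connected_on H E"
    then have "card A \<in> K" using A unfolding K_def H_def V0_def by blast
    then have "Min K \<le> card A" using finK by (rule Min_le[rotated])
    moreover have "Min K \<ge> \<tau> + 1" using assms(3) unfolding weak_vertex_connectivity_def K_def V0_def .
    ultimately show False using A by simp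
  qed
  then have conn: "und_connected_on H E" and cH: "card H \<ge> 2" by auto
  then obtain i0 where i0: "i0 \<in> H" by (metis card.empty ex_in_conv not_numeral_le_zero)
  have "m > 0" using i0 by (auto simp: H_def V0_def)
  then have L: "real m * a > 0" using assms(1) by simp
  have fin: "finite E" using assms(2) by (rule finite_subset) simp
  have HA: "H \<inter> A = {}" by (auto simp: H_def)
  have finV: "finite V0" by (simp add: V0_def)
  have HV: "H \<subseteq> V0" by (auto simp: H_def)
  have claim: "\<forall>x x'. (\<forall>i\<in>V0 - (S \<union> {i0}). x i = x' i) \<and> sum x V0 = sum x' V0 \<longrightarrow>
      distr (titan_rand_space m a E) (view_space m E A) (titan_view m a E A x)
      = distr (titan_rand_space m a E) (view_space m E A) (titan_view m a E A x')"
    if "finite S" "S \<subseteq> H - {i0}" for S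
    using that
  proof (induction S rule: finite_induct)
    case empty
    show ?case
    proof (intro allI impI)
      fix x x' :: "nat \<Rightarrow> real"
      assume h: "(\<forall>i\<in>V0 - ({} \<union> {i0}). x i = x' i) \<and> sum x V0 = sum x' V0"
      have i0V: "i0 \<in> V0" using i0 HV by auto
      have "sum x V0 = x i0 + sum x (V0 - {i0})" by (rule sum.remove[OF finV i0V])
      moreover have "sum x' V0 = x' i0 + sum x' (V0 - {i0})" by (rule sum.remove[OF finV i0V])
      moreover have "sum x (V0 - {i0}) = sum x' (V0 - {i0})" using h by (intro sum.cong) auto
      ultimately have "x i0 = x' i0" using h by simp
      then have "\<forall>i\<in>{1..m}. x i = x' i" using h unfolding V0_def by auto
      then have "titan_view m a E A x = titan_view m a E A x'"
        using view_local[of A m x x' a E] A by auto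
      then show "distr (titan_rand_space m a E) (view_space m E A) (titan_view m a E A x)
      = distr (titan_rand_space m a E) (view_space m E A) (titan_view m a E A x')" by simp
    qed
  next
    case (insert s S)
    show ?case
    proof (intro allI impI)
      fix x x' :: "nat \<Rightarrow> real"
      assume h: "(\<forall>i\<in>V0 - (insert s S \<union> {i0}). x i = x' i) \<and> sum x V0 = sum x' V0"
      have s: "s \<in> H" "s \<noteq> i0" using insert(4) by auto
      define y where "y = mv x s i0 (x' s - x s)"
      have r1: "distr (titan_rand_space m a E) (view_space m E A) (titan_view m a E A x)
          = distr (titan_rand_space m a E) (view_space m E A) (titan_view m a E A y)"
        unfolding y_def using path_move[OF L fin conn s(1) i0 HA] by blast
      have "(\<forall>i\<in>V0 - (S \<union> {i0}). y i = x' i)"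
        using h s(2) by (auto simp: y_def mv_def)
      moreover have "sum y V0 = sum x' V0"
        unfolding y_def using sum_mv[OF finV, of s i0 x] s(1) i0 HV h by auto
      ultimately have "distr (titan_rand_space m a E) (view_space m E A) (titan_view m a E A y)
          = distr (titan_rand_space m a E) (view_space m E A) (titan_view m a E A x')"
        using insert(3) insert(4) by auto
      then show "distr (titan_rand_space m a E) (view_space m E A) (titan_view m a E A x)
      = distr (titan_rand_space m a E) (view_space m E A) (titan_view m a E A x')" using r1 by simp
    qed
  qed
  have fH: "finite (H - {i0})" using finV HV by (auto intro: finite_subset)
  have cl: "\<forall>x x'. (\<forall>i\<in>V0 - ((H - {i0}) \<union> {i0}). x i = x' i) \<and> sum x V0 = sum x' V0 \<longrightarrow>
      distr (titan_rand_space m a E) (view_space m E A) (titan_view m a E A x)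
      = distr (titan_rand_space m a E) (view_space m E A) (titan_view m a E A x')"
    by (rule claim[OF fH subset_refl])
  have VH: "V0 - ((H - {i0}) \<union> {i0}) = A" using A i0 by (auto simp: H_def V0_def)
  show "titan_private m a E A"
    unfolding titan_private_def
  proof (intro allI impI)
    fix x x' :: "nat \<Rightarrow> real"
    assume h: "(\<forall>i\<in>{1..m}. x i \<in> {0..<a}) \<and> (\<forall>i\<in>{1..m}. x' i \<in> {0..<a}) \<and>
       (\<forall>i\<in>A. x i = x' i) \<and> (\<Sum>i = 1..m. x i) = (\<Sum>i = 1..m. x' i)"
    then show "distr (titan_rand_space m a E) (view_space m E A) (titan_view m a E A x) =
         distr (titan_rand_space m a E) (view_space m E A) (titan_view m a E A x')"
      using cl[unfolded VH] unfolding V0_def by blast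
  qed
qed

end
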